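(* Let $L$ be an odd unimodular lattice in dimension $n\equiv 0\pmod 8$ which contains a $k$-frame. Then both even unimodular neighbors $L_0\cup L_1$ and $L_0\cup L_3$ of $L$ contain a $2k$-frame.
   Context: A lattice $L\subset\mathbb{R}^n$ is unimodular if $L=L^*$, where $L^*=\{x\in\mathbb{R}^n:(x,y)\in\mathbb{Z}\ \forall y\in L\}$; it is odd if it contains a vector of odd norm $(x,x)$. For an odd unimodular lattice $L$, let $L_0$ be the sublattice of vectors of even norm (index $2$ in $L$); then $L_0^*=L_0\cup L_1\cup L_2\cup L_3$ for cosets $L_1,L_2,L_3$ of $L_0$ with $L=L_0\cup L_2$. When $n\equiv 0\pmod 8$, $L_0\cup L_1$ and $L_0\cup L_3$ are even unimodular lattices, called the even unimodular neighbors of $L$. A $t$-frame of a lattice in dimension $n$ is a set of $n$ lattice vectors $f_1,\dots,f_n$ with $(f_i,f_j)=t\,\delta_{i,j}$. *)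

theory Defs
  imports "HOL-Analysis.Analysis"
begin

definition is_lattice :: "(real^'n) set \<Rightarrow> bool" where
  "is_lattice L \<longleftrightarrow> (\<exists>b :: 'n \<Rightarrow> real^'n. inj b \<and> independent (range b) \<and>
      L = {(\<Sum>i\<in>UNIV. of_int (c i) *\<^sub>R b i) | c :: 'n \<Rightarrow> int. True})"

definition dual_lattice :: "(real^'n) set \<Rightarrow> (real^'n) set" where
  "dual_lattice L = {x. \<forall>y\<in>L. x \<bullet> y \<in> \<int>}"

definition unimodular :: "(real^'n) set \<Rightarrow> bool" where
  "unimodular L \<longleftrightarrow> is_lattice L \<and> L = dual_lattice L"

definition odd_lattice :: "(real^'n) set \<Rightarrow> bool" where
  "odd_lattice L \<longleftrightarrow> (\<exists>x\<in>L. \<exists>m::int. x \<bullet> x = of_int m \<and> odd m)"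

text \<open>L_0: the sublattice of vectors of even norm.\<close>
definition even_part :: "(real^'n) set \<Rightarrow> (real^'n) set" where
  "even_part L = {x\<in>L. \<exists>m::int. x \<bullet> x = of_int m \<and> even m}"

definition has_frame :: "(real^'n) set \<Rightarrow> real \<Rightarrow> bool" where
  "has_frame L t \<longleftrightarrow> (\<exists>f :: 'n \<Rightarrow> real^'n. (\<forall>i. f i \<in> L) \<and>
      (\<forall>i j. f i \<bullet> f j = (if i = j then t else 0)))"

end

theory Submission
  imports Defs
begin

lemma pairing_exists:
  assumes "even CARD('n)"
  shows "\<exists>(s::'n::finite \<Rightarrow> 'n) P. (\<forall>i. s (s i) = i \<and> s i \<noteq> i \<and> (P i \<longleftrightarrow> \<not> P (s i)))"
proof -
  let ?n = "CARD('n)"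
  obtain e :: "nat \<Rightarrow> 'n" where e: "bij_betw e {..<?n} UNIV"
    using ex_bij_betw_nat_finite[of "UNIV::'n set"] by (auto simp: lessThan_atLeast0)
  define h where "h = the_inv_into {..<?n} e"
  have h1: "h i < ?n" for i
    using e unfolding h_def bij_betw_def
    by (metis UNIV_I lessThan_iff order_refl the_inv_into_into)
  have h2: "e (h i) = i" for i
    using e unfolding h_def by (simp add: f_the_inv_into_f_bij_betw)
  have h3: "m < ?n \<Longrightarrow> h (e m) = m" for m
    using e unfolding h_def by (simp add: bij_betw_def the_inv_into_f_f)
  define q where "q m = (if even m then m + 1 else m - 1)" for m :: nat
  have q1: "m < ?n \<Longrightarrow> q m < ?n" for m using assms unfolding q_def
    by (cases "even m") (auto elim!: evenE oddE)
  have q2: "q (q m) = m" for m unfolding q_def by (cases m) auto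
  have q3: "q m \<noteq> m" for m unfolding q_def by (cases m) auto
  have q4: "even (q m) \<longleftrightarrow> \<not> even m" for m unfolding q_def by (cases m) auto
  define s where "s i = e (q (h i))" for i
  have st: "s (s i) = i \<and> s i \<noteq> i \<and> (even (h i) \<longleftrightarrow> \<not> even (h (s i)))" for i
  proof -
    have hs: "h (s i) = q (h i)" unfolding s_def using h3 q1 h1 by auto
    have a: "s (s i) = i"
    proof -
      have "s (s i) = e (q (h (s i)))" by (simp add: s_def)
      also have "\<dots> = i" using hs q2 h2 by simp
      finally show ?thesis .
    qed
    have b: "s i \<noteq> i"
    proof
      assume "s i = i"
      then have "h (s i) = h i" by simp
      then show False using hs q3[of "h i"] by simp
    qed
    have c: "even (h i) \<longleftrightarrow> \<not> even (h (s i))" unfolding hs using q4[of "h i"] by simp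
    show ?thesis using a b c by blast
  qed
  show ?thesis
    apply (rule exI[of _ s], rule exI[of _ "\<lambda>i. even (h i)"], rule allI)
    apply (rule st)
    done
qed

theorem lemma3p2:
  fixes L :: "(real^'n) set" and k :: real
  assumes "unimodular L" and "odd_lattice L"
    and "CARD('n) mod 8 = 0"
    and "has_frame L k"
  shows "\<forall>v \<in> dual_lattice (even_part L) - L.
           has_frame (even_part L \<union> (\<lambda>x. v + x) ` even_part L) (2 * k)"
proof -
  have LD: "L = dual_lattice L" using assms(1) unfolding unimodular_def by simp
  have add: "x + y \<in> L" if "x \<in> L" "y \<in> L" for x y
  proof -
    have "x \<in> dual_lattice L" "y \<in> dual_lattice L" using that LD[symmetric] by simp_all
    then have "x + y \<in> dual_lattice L" unfolding dual_lattice_def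
      by (auto simp: inner_add_left)
    then show ?thesis using LD[symmetric] by simp
  qed
  have sub: "x - y \<in> L" if "x \<in> L" "y \<in> L" for x y
  proof -
    have "x \<in> dual_lattice L" "y \<in> dual_lattice L" using that LD[symmetric] by simp_all
    then have "x - y \<in> dual_lattice L" unfolding dual_lattice_def
      by (auto simp: inner_diff_left)
    then show ?thesis using LD[symmetric] by simp
  qed
  obtain f :: "'n \<Rightarrow> real^'n" where fL: "\<And>i. f i \<in> L"
    and fo: "\<And>i j. f i \<bullet> f j = (if i = j then k else 0)"
    using assms(4) unfolding has_frame_def by blast
  have "f undefined \<bullet> f undefined \<in> \<int>"
  proof -
    have "f undefined \<in> dual_lattice L" using fL[of undefined] LD[symmetric] by simp
    then show ?thesis using fL[of undefined] unfolding dual_lattice_def by blast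
  qed
  then have "k \<in> \<int>" using fo[of undefined undefined] by simp
  then obtain m :: int where km: "k = of_int m" by (rule Ints_cases)
  have "even CARD('n)" using assms(3) by presburger
  obtain s :: "'n \<Rightarrow> 'n" and P where
    sP0: "\<forall>i. s (s i) = i \<and> s i \<noteq> i \<and> (P i \<longleftrightarrow> \<not> P (s i))"
    using pairing_exists[where 'n='n, OF \<open>even CARD('n)\<close>] by (elim exE) blast
  have sP: "\<And>i. s (s i) = i" "\<And>i. s i \<noteq> i" "\<And>i. P i \<longleftrightarrow> \<not> P (s i)"
    using sP0 by blast+
  define g where "g i = (if P i then f i + f (s i) else f (s i) - f i)" for i
  have gL: "g i \<in> L" for i unfolding g_def using add sub fL by auto
  have go: "g i \<bullet> g j = (if i = j then 2 * k else 0)" for i j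
  proof (cases "i = j")
    case True
    then show ?thesis using sP(2)[of i] unfolding g_def
      by (auto simp: inner_add_left inner_add_right inner_diff_left inner_diff_right fo)
  next
    case False
    show ?thesis
    proof (cases "j = s i")
      case True
      have ps: "P (s i) \<longleftrightarrow> \<not> P i" using sP(3)[of i] by blast
      show ?thesis using True ps sP(1)[of i] sP(2)[of i] False unfolding g_def
        by (auto simp: inner_add_left inner_add_right inner_diff_left inner_diff_right fo)
    next
      case F2: False
      have "s j \<noteq> i" using F2 sP(1)[of j] by metis
      moreover have "s j \<noteq> s i" using False sP(1) by metis
      moreover have "s i \<noteq> j" using F2 by metis
      moreover have "s i \<noteq> i" using sP(2) by metis
      ultimately show ?thesis using False F2 unfolding g_def
        by (auto simp: inner_add_left inner_add_right inner_diff_left inner_diff_right fo)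
    qed
  qed
  have gE: "g i \<in> even_part L" for i
    unfolding even_part_def using gL go[of i i] km
    by (auto intro!: exI[of _ "2*m"])
  have "has_frame (even_part L \<union> (\<lambda>x. v + x) ` even_part L) (2 * k)" for v
    unfolding has_frame_def by (rule exI[of _ g]) (use gE go in blast)
  then show ?thesis by blast
qed

end
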